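(* Let $\omega\in\mathbb{C}_*^d$ and let $u:k\mapsto\omega^kh(k)$ be a nonzero vectorial $pg$-sequence, where $h=(h_1,\dots,h_r)\in\mathbb{C}[z]\otimes\mathbb{C}^r$ and $h_i$ has multi-degree $\delta(i)\in\mathbb{Z}^d_+$. Let $A_0$ be the (unclosed) linear span of the $\mathbb{Z}^d$-translates of $u$. If $|\delta(i)|\ge2$ for some $i$, then there exists a nonzero vectorial $pg$-sequence $w:k\mapsto\omega^kg(k)$ in $A_0$ with $g\in\mathbb{C}[z]\otimes\mathbb{C}^r$ a nonconstant vector-valued polynomial of total degree at most one in each coordinate (i.e. a nonconstant linear vector-valued polynomial).
   Context: $\mathbb{C}[z]=\mathbb{C}[z_1,\dots,z_d]$, $\mathbb{C}_*^d=(\mathbb{C}\setminus\{0\})^d$, $\omega^k=\prod_i\omega_i^{k_i}$. The multi-degree of a nonzero polynomial is the exponent $\delta\in\mathbb{Z}^d_+$ of its leading monomial $z^\delta$ with respect to the lexicographic order on $\mathbb{Z}^d_+$, and $|\delta|=\delta_1+\dots+\delta_d$. The $\mathbb{Z}^d$-translates of $u$ are the functions $k\mapsto u(k-j)$, $j\in\mathbb{Z}^d$. *)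

theory Defs
  imports Complex_Main "HOL-Library.Poly_Mapping"
begin

text \<open>Polynomials in variables z_0, z_1, ... with complex coefficients:
  a monomial is a finitely supported exponent vector (a poly_mapping from nat to nat),
  a polynomial is a finitely supported coefficient map on monomials.\<close>
type_synonym mpoly = "(nat \<Rightarrow>\<^sub>0 nat) \<Rightarrow>\<^sub>0 complex"

definition Zd :: "nat \<Rightarrow> (nat \<Rightarrow> int) set" where
  "Zd d = {k. \<forall>i\<ge>d. k i = 0}"

definition mpoly_vars_in :: "nat \<Rightarrow> mpoly \<Rightarrow> bool" where
  "mpoly_vars_in d p \<longleftrightarrow> (\<forall>\<alpha>::nat \<Rightarrow>\<^sub>0 nat. \<alpha> \<in> Poly_Mapping.keys p \<longrightarrow> Poly_Mapping.keys \<alpha> \<subseteq> {..<d})"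

definition peval :: "mpoly \<Rightarrow> (nat \<Rightarrow> int) \<Rightarrow> complex" where
  "peval p k = (\<Sum>\<alpha>\<in>Poly_Mapping.keys p. Poly_Mapping.lookup p \<alpha> * (\<Prod>i\<in>Poly_Mapping.keys \<alpha>. (of_int (k i)) ^ Poly_Mapping.lookup \<alpha> i))"

definition gpow :: "nat \<Rightarrow> (nat \<Rightarrow> complex) \<Rightarrow> (nat \<Rightarrow> int) \<Rightarrow> complex" where
  "gpow d \<omega> k = (\<Prod>i<d. \<omega> i powi k i)"

definition tdeg :: "(nat \<Rightarrow>\<^sub>0 nat) \<Rightarrow> nat" where
  "tdeg \<alpha> = (\<Sum>i\<in>Poly_Mapping.keys \<alpha>. Poly_Mapping.lookup \<alpha> i)"

definition lex_less :: "(nat \<Rightarrow>\<^sub>0 nat) \<Rightarrow> (nat \<Rightarrow>\<^sub>0 nat) \<Rightarrow> bool" where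
  "lex_less \<alpha> \<beta> \<longleftrightarrow> (\<exists>i. (\<forall>j<i. Poly_Mapping.lookup \<alpha> j = Poly_Mapping.lookup \<beta> j) \<and> Poly_Mapping.lookup \<alpha> i < Poly_Mapping.lookup \<beta> i)"

definition multideg :: "mpoly \<Rightarrow> (nat \<Rightarrow>\<^sub>0 nat)" where
  "multideg p = (THE \<alpha>. \<alpha> \<in> Poly_Mapping.keys p \<and> (\<forall>\<beta>\<in>Poly_Mapping.keys p. \<beta> \<noteq> \<alpha> \<longrightarrow> lex_less \<beta> \<alpha>))"

definition pg_seq :: "nat \<Rightarrow> nat \<Rightarrow> (nat \<Rightarrow> complex) \<Rightarrow> (nat \<Rightarrow> mpoly)
    \<Rightarrow> (nat \<Rightarrow> int) \<Rightarrow> nat \<Rightarrow> complex" where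
  "pg_seq d r \<omega> h k i = (if i < r then gpow d \<omega> k * peval (h i) k else 0)"

definition translate_span :: "nat \<Rightarrow> nat \<Rightarrow> ((nat \<Rightarrow> int) \<Rightarrow> nat \<Rightarrow> complex)
    \<Rightarrow> ((nat \<Rightarrow> int) \<Rightarrow> nat \<Rightarrow> complex) set" where
  "translate_span d r u = {w. \<exists>J c. finite J \<and> J \<subseteq> Zd d \<and>
      (\<forall>k\<in>Zd d. \<forall>i<r. w k i = (\<Sum>j\<in>J. c j * u (\<lambda>l. k l - j l) i))}"

end

theory Submission
  imports Defs "HOL-Computational_Algebra.Polynomial"
begin

lemma lex_less_irrefl: "\<not> lex_less a a"
  by (auto simp: lex_less_def)

lemma lex_less_trans: "lex_less a b \<Longrightarrow> lex_less b c \<Longrightarrow> lex_less a c"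
  unfolding lex_less_def
proof (elim exE conjE)
  fix i j
  assume 1: "\<forall>m<i. Poly_Mapping.lookup a m = Poly_Mapping.lookup b m" "Poly_Mapping.lookup a i < Poly_Mapping.lookup b i"
     and 2: "\<forall>m<j. Poly_Mapping.lookup b m = Poly_Mapping.lookup c m" "Poly_Mapping.lookup b j < Poly_Mapping.lookup c j"
  show "\<exists>i. (\<forall>j<i. Poly_Mapping.lookup a j = Poly_Mapping.lookup c j) \<and> Poly_Mapping.lookup a i < Poly_Mapping.lookup c i"
  proof (cases i j rule: linorder_cases)
    case less
    have "\<forall>m<i. Poly_Mapping.lookup a m = Poly_Mapping.lookup c m" using 1 2 less by simp
    moreover have "Poly_Mapping.lookup a i < Poly_Mapping.lookup c i" using 1 2 less by simp
    ultimately show ?thesis by blast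
  next
    case equal
    have "\<forall>m<i. Poly_Mapping.lookup a m = Poly_Mapping.lookup c m" using 1 2 equal by simp
    moreover have "Poly_Mapping.lookup a i < Poly_Mapping.lookup c i" using 1 2 equal by simp
    ultimately show ?thesis by blast
  next
    case greater
    have "\<forall>m<j. Poly_Mapping.lookup a m = Poly_Mapping.lookup c m" using 1 2 greater by simp
    moreover have "Poly_Mapping.lookup a j < Poly_Mapping.lookup c j" using 1 2 greater by simp
    ultimately show ?thesis by blast
  qed
qed

lemma lex_less_total: "a \<noteq> b \<Longrightarrow> lex_less a b \<or> lex_less b a"
proof -
  assume ab: "a \<noteq> b"
  have ex: "\<exists>i. Poly_Mapping.lookup a i \<noteq> Poly_Mapping.lookup b i"
  proof (rule ccontr)
    assume "\<not> (\<exists>i. Poly_Mapping.lookup a i \<noteq> Poly_Mapping.lookup b i)"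
    then have "\<And>i. Poly_Mapping.lookup a i = Poly_Mapping.lookup b i" by simp
    then have "a = b" by (rule poly_mapping_eqI)
    then show False using ab by simp
  qed
  define i where "i = (LEAST i. Poly_Mapping.lookup a i \<noteq> Poly_Mapping.lookup b i)"
  have i: "Poly_Mapping.lookup a i \<noteq> Poly_Mapping.lookup b i"
    unfolding i_def using ex by (rule LeastI_ex)
  have min: "\<forall>m<i. Poly_Mapping.lookup a m = Poly_Mapping.lookup b m"
    unfolding i_def using not_less_Least by blast
  show ?thesis
  proof (cases "Poly_Mapping.lookup a i < Poly_Mapping.lookup b i")
    case True thus ?thesis using min unfolding lex_less_def by blast
  next
    case False
    then have lt: "Poly_Mapping.lookup b i < Poly_Mapping.lookup a i" using i by simp
    have "\<forall>m<i. Poly_Mapping.lookup b m = Poly_Mapping.lookup a m" using min by simp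
    thus ?thesis using lt unfolding lex_less_def by blast
  qed
qed

lemma lex_max_exists:
  assumes "finite S" "S \<noteq> {}"
  shows "\<exists>a\<in>S. \<forall>b\<in>S. b \<noteq> a \<longrightarrow> lex_less b a"
  using assms
proof (induction S rule: finite_ne_induct)
  case (singleton x) thus ?case by auto
next
  case (insert x F)
  then obtain m where m: "m \<in> F" "\<forall>b\<in>F. b \<noteq> m \<longrightarrow> lex_less b m" by blast
  show ?case
  proof (cases "lex_less m x")
    case True
    have "\<forall>b\<in>insert x F. b \<noteq> x \<longrightarrow> lex_less b x"
    proof (intro ballI impI)
      fix b assume "b \<in> insert x F" "b \<noteq> x"
      then have "b \<in> F" by simp
      show "lex_less b x"
      proof (cases "b = m")
        case True thus ?thesis using \<open>lex_less m x\<close> by simp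
      next
        case False thus ?thesis using m(2) \<open>b \<in> F\<close> \<open>lex_less m x\<close> lex_less_trans by blast
      qed
    qed
    then show ?thesis by blast
  next
    case False
    have "x \<noteq> m" using insert.hyps m(1) by blast
    then have "lex_less x m" using lex_less_total[of x m] False by blast
    then show ?thesis using m by auto
  qed
qed

lemma multideg_in_keys:
  assumes "p \<noteq> 0"
  shows "multideg p \<in> Poly_Mapping.keys p"
proof -
  have ne: "Poly_Mapping.keys p \<noteq> {}" using assms by simp
  obtain a where a: "a \<in> Poly_Mapping.keys p" "\<forall>b\<in>Poly_Mapping.keys p. b \<noteq> a \<longrightarrow> lex_less b a"
    using lex_max_exists[OF finite_keys ne] by blast
  have "multideg p = a"
    unfolding multideg_def
  proof (rule the_equality)
    show "a \<in> Poly_Mapping.keys p \<and> (\<forall>b\<in>Poly_Mapping.keys p. b \<noteq> a \<longrightarrow> lex_less b a)" using a by blast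
  next
    fix c assume c: "c \<in> Poly_Mapping.keys p \<and> (\<forall>b\<in>Poly_Mapping.keys p. b \<noteq> c \<longrightarrow> lex_less b c)"
    show "c = a"
    proof (rule ccontr)
      assume "c \<noteq> a"
      then have "lex_less c a" "lex_less a c" using a c by auto
      then show False using lex_less_trans lex_less_irrefl by blast
    qed
  qed
  then show ?thesis using a by simp
qed


definition mnm :: "(nat \<Rightarrow>\<^sub>0 nat) \<Rightarrow> (nat \<Rightarrow> int) \<Rightarrow> complex" where
  "mnm \<alpha> k = (\<Prod>i\<in>Poly_Mapping.keys \<alpha>. (of_int (k i)) ^ Poly_Mapping.lookup \<alpha> i)"

lemma peval_mnm: "peval p k = (\<Sum>\<alpha>\<in>Poly_Mapping.keys p. Poly_Mapping.lookup p \<alpha> * mnm \<alpha> k)"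
  unfolding peval_def mnm_def by simp

lemma peval_superset:
  assumes "finite S" "Poly_Mapping.keys p \<subseteq> S"
  shows "peval p k = (\<Sum>\<alpha>\<in>S. Poly_Mapping.lookup p \<alpha> * mnm \<alpha> k)"
  unfolding peval_mnm
  by (rule sum.mono_neutral_left) (use assms in \<open>auto simp: in_keys_iff\<close>)

lemma peval_add: "peval (p + q) k = peval p k + peval q k"
proof -
  let ?S = "Poly_Mapping.keys p \<union> Poly_Mapping.keys q"
  have f: "finite ?S" by simp
  have "peval (p + q) k = (\<Sum>\<alpha>\<in>?S. Poly_Mapping.lookup (p + q) \<alpha> * mnm \<alpha> k)"
    by (rule peval_superset[OF f keys_add])
  also have "\<dots> = (\<Sum>\<alpha>\<in>?S. Poly_Mapping.lookup p \<alpha> * mnm \<alpha> k) + (\<Sum>\<alpha>\<in>?S. Poly_Mapping.lookup q \<alpha> * mnm \<alpha> k)"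
    by (simp add: lookup_add distrib_right sum.distrib)
  also have "\<dots> = peval p k + peval q k"
    by (simp add: peval_superset[OF f])
  finally show ?thesis .
qed

lemma peval_diff: "peval (p - q) k = peval p k - peval q k"
proof -
  have "peval p k = peval ((p - q) + q) k" by simp
  also have "\<dots> = peval (p - q) k + peval q k" by (rule peval_add)
  finally show ?thesis by simp
qed

lemma peval_zero [simp]: "peval 0 k = 0"
  unfolding peval_def by simp

lemma peval_sum: "peval (\<Sum>l\<in>A. f l) k = (\<Sum>l\<in>A. peval (f l) k)"
proof (cases "finite A")
  case True
  then show ?thesis by (induction A rule: finite_induct) (simp_all add: peval_add)
qed simp

lemma peval_single: "peval (Poly_Mapping.single \<alpha> c) k = c * mnm \<alpha> k"
  by (cases "c = 0") (simp_all add: peval_mnm)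

lemma mnm_zero [simp]: "mnm 0 k = 1"
  unfolding mnm_def by simp

lemma mnm_single1 [simp]: "mnm (Poly_Mapping.single l 1) k = of_int (k l)"
  unfolding mnm_def by simp

lemma digit_bound:
  fixes b :: "nat \<Rightarrow> nat"
  assumes "\<forall>i<n. b i < M"
  shows "(\<Sum>i<n. b i * M ^ i) < M ^ n"
  using assms
proof (induction n)
  case 0 thus ?case by simp
next
  case (Suc n)
  have IH: "(\<Sum>i<n. b i * M ^ i) < M ^ n" using Suc by simp
  have "b n < M" using Suc.prems by simp
  then have bn: "b n + 1 \<le> M" by simp
  have "(\<Sum>i<Suc n. b i * M ^ i) = (\<Sum>i<n. b i * M ^ i) + b n * M ^ n" by simp
  also have "\<dots> < M ^ n + b n * M ^ n" using IH by simp
  also have "\<dots> = (b n + 1) * M ^ n" by simp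
  also have "\<dots> \<le> M * M ^ n" using bn by (rule mult_le_mono1)
  finally show ?case by simp
qed

lemma divmod_digit:
  fixes L b P :: nat
  assumes "L < P"
  shows "(L + b * P) div P = b"
proof -
  have P0: "P \<noteq> 0" using assms by simp
  have "(L + b * P) div P = b + L div P" using P0 by (rule div_mult_self1)
  also have "L div P = 0" using assms by (rule div_less)
  finally show ?thesis by simp
qed

lemma digits_unique:
  fixes b c :: "nat \<Rightarrow> nat"
  assumes "\<forall>i<n. b i < M" "\<forall>i<n. c i < M"
    and "(\<Sum>i<n. b i * M ^ i) = (\<Sum>i<n. c i * M ^ i)"
  shows "\<forall>i<n. b i = c i"
  using assms
proof (induction n)
  case 0 thus ?case by simp
next
  case (Suc n)
  let ?Lb = "\<Sum>i<n. b i * M ^ i" and ?Lc = "\<Sum>i<n. c i * M ^ i"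
  have hb: "\<forall>i<n. b i < M" using Suc.prems(1) by simp
  have hc: "\<forall>i<n. c i < M" using Suc.prems(2) by simp
  have Lb: "?Lb < M ^ n" using hb by (rule digit_bound)
  have Lc: "?Lc < M ^ n" using hc by (rule digit_bound)
  have eq: "?Lb + b n * M ^ n = ?Lc + c n * M ^ n" using Suc.prems(3) by simp
  have bc: "b n = c n"
    using divmod_digit[OF Lb, of "b n"] divmod_digit[OF Lc, of "c n"] eq by simp
  then have "?Lb = ?Lc" using eq by simp
  then have IH: "\<forall>i<n. b i = c i" using Suc.IH[OF hb hc] by blast
  show ?case
  proof (intro allI impI)
    fix i assume "i < Suc n"
    then have "i < n \<or> i = n" by linarith
    then show "b i = c i" using IH bc by blast
  qed
qed

lemma peval_identity:
  assumes vars: "mpoly_vars_in d p" and z: "\<forall>k\<in>Zd d. peval p k = 0"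
  shows "p = 0"
proof (rule ccontr)
  assume p0: "p \<noteq> 0"
  define S where "S = Poly_Mapping.keys p"
  have fS: "finite S" unfolding S_def by simp
  define M where "M = Suc (\<Sum>\<alpha>\<in>S. tdeg \<alpha>)"
  have ltM: "Poly_Mapping.lookup \<alpha> i < M" if "\<alpha> \<in> S" for \<alpha> i
  proof (cases "i \<in> Poly_Mapping.keys \<alpha>")
    case True
    have "Poly_Mapping.lookup \<alpha> i \<le> tdeg \<alpha>" unfolding tdeg_def
      using True by (intro member_le_sum) auto
    also have "\<dots> \<le> (\<Sum>\<alpha>\<in>S. tdeg \<alpha>)" using that fS by (intro member_le_sum) auto
    finally show ?thesis unfolding M_def by simp
  next
    case False thus ?thesis unfolding M_def by (simp add: in_keys_iff)
  qed
  have keysd: "Poly_Mapping.keys \<alpha> \<subseteq> {..<d}" if "\<alpha> \<in> S" for \<alpha>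
    using vars that unfolding mpoly_vars_in_def S_def by blast
  define e where "e \<beta> = (\<Sum>i<d. Poly_Mapping.lookup \<beta> i * M ^ i)" for \<beta>
  have inj: "\<alpha> = \<beta>" if "\<alpha> \<in> S" "\<beta> \<in> S" "e \<alpha> = e \<beta>" for \<alpha> \<beta>
  proof (rule poly_mapping_eqI)
    fix i
    have lt: "\<forall>i<d. Poly_Mapping.lookup \<alpha> i = Poly_Mapping.lookup \<beta> i"
      using digits_unique[of d "Poly_Mapping.lookup \<alpha>" M "Poly_Mapping.lookup \<beta>"] that ltM
      unfolding e_def by blast
    show "Poly_Mapping.lookup \<alpha> i = Poly_Mapping.lookup \<beta> i"
    proof (cases "i < d")
      case True thus ?thesis using lt by simp
    next
      case False
      then have "i \<notin> Poly_Mapping.keys \<alpha>" "i \<notin> Poly_Mapping.keys \<beta>" using keysd that by auto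
      thus ?thesis by (simp add: in_keys_iff)
    qed
  qed
  define kt where "kt t = (\<lambda>i. if i < d then t ^ (M ^ i) else (0::int))" for t :: int
  have ktZ: "kt t \<in> Zd d" for t unfolding kt_def Zd_def by simp
  have mnmkt: "mnm \<beta> (kt t) = (of_int t) ^ (e \<beta>)" if "\<beta> \<in> S" for \<beta> t
  proof -
    have "mnm \<beta> (kt t) = (\<Prod>i\<in>Poly_Mapping.keys \<beta>. (of_int t :: complex) ^ (M ^ i * Poly_Mapping.lookup \<beta> i))"
      unfolding mnm_def
    proof (rule prod.cong)
      fix i assume "i \<in> Poly_Mapping.keys \<beta>"
      then have "i < d" using keysd that by auto
      then show "of_int (kt t i) ^ Poly_Mapping.lookup \<beta> i = (of_int t :: complex) ^ (M ^ i * Poly_Mapping.lookup \<beta> i)"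
        unfolding kt_def by (simp add: power_mult)
    qed simp
    also have "\<dots> = (of_int t) ^ (\<Sum>i\<in>Poly_Mapping.keys \<beta>. M ^ i * Poly_Mapping.lookup \<beta> i)"
      by (simp add: power_sum)
    also have "(\<Sum>i\<in>Poly_Mapping.keys \<beta>. M ^ i * Poly_Mapping.lookup \<beta> i) = e \<beta>"
      unfolding e_def
      by (rule sum.mono_neutral_cong_left) (use keysd[OF that] in \<open>auto simp: in_keys_iff\<close>)
    finally show ?thesis .
  qed
  define P where "P = (\<Sum>\<beta>\<in>S. monom (Poly_Mapping.lookup p \<beta>) (e \<beta>))"
  have evalP: "peval p (kt t) = poly P (of_int t)" for t
    unfolding peval_mnm P_def poly_sum poly_monom S_def[symmetric]
    by (rule sum.cong) (simp_all add: mnmkt)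
  have "S \<noteq> {}" using p0 unfolding S_def by simp
  then obtain \<alpha> where a: "\<alpha> \<in> S" by blast
  have "coeff P (e \<alpha>) = (\<Sum>\<beta>\<in>S. if e \<beta> = e \<alpha> then Poly_Mapping.lookup p \<beta> else 0)"
    unfolding P_def coeff_sum coeff_monom by (rule sum.cong) auto
  also have "\<dots> = (\<Sum>\<beta>\<in>S. if \<beta> = \<alpha> then Poly_Mapping.lookup p \<beta> else 0)"
  proof (rule sum.cong)
    fix \<beta> assume b: "\<beta> \<in> S"
    show "(if e \<beta> = e \<alpha> then Poly_Mapping.lookup p \<beta> else 0) = (if \<beta> = \<alpha> then Poly_Mapping.lookup p \<beta> else 0)"
    proof (cases "\<beta> = \<alpha>")
      case False
      then have "e \<beta> \<noteq> e \<alpha>" using inj[OF b a] by blast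
      then show ?thesis using False by simp
    qed simp
  qed simp
  also have "\<dots> = Poly_Mapping.lookup p \<alpha>" using a fS by simp
  finally have "coeff P (e \<alpha>) \<noteq> 0" using a unfolding S_def by (simp add: in_keys_iff)
  then have P0: "P \<noteq> 0" by auto
  have "range (of_int :: int \<Rightarrow> complex) \<subseteq> {x. poly P x = 0}"
  proof
    fix x assume "x \<in> range (of_int :: int \<Rightarrow> complex)"
    then obtain t where t: "x = of_int t" by blast
    have "poly P x = peval p (kt t)" using t evalP by simp
    also have "\<dots> = 0" using z ktZ by blast
    finally show "x \<in> {x. poly P x = 0}" by simp
  qed
  then have fr: "finite (range (of_int :: int \<Rightarrow> complex))"
    by (rule finite_subset) (rule poly_roots_finite[OF P0])
  have "inj (of_int :: int \<Rightarrow> complex)" by (rule injI) simp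
  then have "finite (UNIV :: int set)" using fr by (metis finite_imageD)
  then show False by simp
qed


definition sh :: "nat \<Rightarrow> (nat \<Rightarrow> int) \<Rightarrow> (nat \<Rightarrow> int)" where
  "sh l k = k(l := k l - 1)"

definition dlt :: "nat \<Rightarrow> ((nat \<Rightarrow> int) \<Rightarrow> complex) \<Rightarrow> ((nat \<Rightarrow> int) \<Rightarrow> complex)" where
  "dlt l f = (\<lambda>k. f k - f (sh l k))"

fun deg_le :: "nat \<Rightarrow> nat \<Rightarrow> ((nat \<Rightarrow> int) \<Rightarrow> complex) \<Rightarrow> bool" where
  "deg_le d 0 f = (\<forall>k\<in>Zd d. \<forall>k'\<in>Zd d. f k = f k')"
| "deg_le d (Suc n) f = (\<forall>l<d. deg_le d n (dlt l f))"

lemma sh_Zd: "k \<in> Zd d \<Longrightarrow> l < d \<Longrightarrow> sh l k \<in> Zd d"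
  unfolding Zd_def sh_def by auto

lemma zero_Zd: "(\<lambda>i. 0) \<in> Zd d"
  unfolding Zd_def by simp

lemma sh_comm: "sh l (sh m k) = sh m (sh l k)"
  unfolding sh_def by (rule ext) simp

lemma deg_cong: "(\<forall>k\<in>Zd d. f k = g k) \<Longrightarrow> deg_le d n f \<Longrightarrow> deg_le d n g"
proof (induction n arbitrary: f g)
  case 0
  show ?case unfolding deg_le.simps
  proof (intro ballI)
    fix k k' assume k: "k \<in> Zd d" "k' \<in> Zd d"
    have "f k = f k'" using 0(2)[unfolded deg_le.simps] k by blast
    moreover have "f k = g k" "f k' = g k'" using 0(1) k by blast+
    ultimately show "g k = g k'" by simp
  qed
next
  case (Suc n)
  show ?case unfolding deg_le.simps
  proof (intro allI impI)
    fix l assume l: "l < d"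
    have a: "\<forall>k\<in>Zd d. dlt l f k = dlt l g k"
    proof
      fix k assume k: "k \<in> Zd d"
      have "sh l k \<in> Zd d" using sh_Zd[OF k l] .
      then have "f k = g k" "f (sh l k) = g (sh l k)" using Suc.prems(1) k by blast+
      then show "dlt l f k = dlt l g k" unfolding dlt_def by simp
    qed
    have b: "deg_le d n (dlt l f)" using Suc.prems(2) l by simp
    show "deg_le d n (dlt l g)" by (rule Suc.IH[OF a b])
  qed
qed

lemma deg_add: "deg_le d n f \<Longrightarrow> deg_le d n g \<Longrightarrow> deg_le d n (\<lambda>k. f k + g k)"
proof (induction n arbitrary: f g)
  case 0
  show ?case unfolding deg_le.simps
  proof (intro ballI)
    fix k k' assume k: "k \<in> Zd d" "k' \<in> Zd d"
    have "f k = f k'" using 0(1)[unfolded deg_le.simps] k by blast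
    moreover have "g k = g k'" using 0(2)[unfolded deg_le.simps] k by blast
    ultimately show "f k + g k = f k' + g k'" by simp
  qed
next
  case (Suc n)
  show ?case unfolding deg_le.simps
  proof (intro allI impI)
    fix l assume l: "l < d"
    have e: "dlt l (\<lambda>k. f k + g k) = (\<lambda>k. dlt l f k + dlt l g k)"
      unfolding dlt_def by (rule ext) simp
    have a: "deg_le d n (dlt l f)" using Suc.prems(1) l by simp
    have b: "deg_le d n (dlt l g)" using Suc.prems(2) l by simp
    show "deg_le d n (dlt l (\<lambda>k. f k + g k))" unfolding e by (rule Suc.IH[OF a b])
  qed
qed

lemma deg_scale: "deg_le d n f \<Longrightarrow> deg_le d n (\<lambda>k. c * f k)"
proof (induction n arbitrary: f)
  case 0
  show ?case unfolding deg_le.simps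
  proof (intro ballI)
    fix k k' assume k: "k \<in> Zd d" "k' \<in> Zd d"
    have "f k = f k'" using 0(1)[unfolded deg_le.simps] k by blast
    then show "c * f k = c * f k'" by simp
  qed
next
  case (Suc n)
  show ?case unfolding deg_le.simps
  proof (intro allI impI)
    fix l assume l: "l < d"
    have e: "dlt l (\<lambda>k. c * f k) = (\<lambda>k. c * dlt l f k)"
      unfolding dlt_def by (rule ext) (simp add: right_diff_distrib)
    have a: "deg_le d n (dlt l f)" using Suc.prems(1) l by simp
    show "deg_le d n (dlt l (\<lambda>k. c * f k))" unfolding e by (rule Suc.IH[OF a])
  qed
qed

lemma deg_const: "deg_le d n (\<lambda>k. c)"
proof (induction n arbitrary: c)
  case 0 thus ?case by simp
next
  case (Suc n)
  have e: "dlt l (\<lambda>k. c) = (\<lambda>k. 0)" for l unfolding dlt_def by simp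
  show ?case unfolding deg_le.simps e using Suc.IH by simp
qed

lemma deg_mono: "deg_le d n f \<Longrightarrow> deg_le d (Suc n) f"
proof (induction n arbitrary: f)
  case 0
  show ?case unfolding deg_le.simps
  proof (intro allI impI)
    fix l assume l: "l < d"
    have "\<forall>k\<in>Zd d. dlt l f k = 0"
    proof
      fix k assume k: "k \<in> Zd d"
      have "sh l k \<in> Zd d" using sh_Zd[OF k l] .
      then have "f k = f (sh l k)" using 0[unfolded deg_le.simps] k by blast
      then show "dlt l f k = 0" unfolding dlt_def by simp
    qed
    then show "\<forall>k\<in>Zd d. \<forall>k'\<in>Zd d. dlt l f k = dlt l f k'" by simp
  qed
next
  case (Suc n)
  show ?case using Suc.IH Suc.prems by simp
qed

lemma deg_mono_le: "n \<le> m \<Longrightarrow> deg_le d n f \<Longrightarrow> deg_le d m f"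
proof (induction m rule: dec_induct)
  case base thus ?case .
next
  case (step m) thus ?case using deg_mono by blast
qed

lemma deg_shift: "l < d \<Longrightarrow> deg_le d n f \<Longrightarrow> deg_le d n (\<lambda>k. f (sh l k))"
proof (induction n arbitrary: f)
  case 0
  show ?case unfolding deg_le.simps
  proof (intro ballI)
    fix k k' assume "k \<in> Zd d" "k' \<in> Zd d"
    then have "sh l k \<in> Zd d" "sh l k' \<in> Zd d" using sh_Zd 0(1) by auto
    then show "f (sh l k) = f (sh l k')" using 0(2)[unfolded deg_le.simps] by blast
  qed
next
  case (Suc n)
  show ?case unfolding deg_le.simps
  proof (intro allI impI)
    fix m assume m: "m < d"
    have e: "dlt m (\<lambda>k. f (sh l k)) = (\<lambda>k. dlt m f (sh l k))"
      unfolding dlt_def by (rule ext) (simp add: sh_comm)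
    have "deg_le d n (dlt m f)" using Suc.prems m by simp
    then show "deg_le d n (dlt m (\<lambda>k. f (sh l k)))" unfolding e
      using Suc.IH Suc.prems(1) by blast
  qed
qed

lemma deg0_const: "deg_le d 0 f \<Longrightarrow> k \<in> Zd d \<Longrightarrow> f k = f (\<lambda>i. 0)"
  using zero_Zd[of d] unfolding deg_le.simps by blast

lemma deg_mult: "deg_le d m f \<Longrightarrow> deg_le d n g \<Longrightarrow> deg_le d (m + n) (\<lambda>k. f k * g k)"
proof (induction m arbitrary: n f g)
  case 0
  have a: "deg_le d n (\<lambda>k. f (\<lambda>i. 0) * g k)" using 0(2) by (rule deg_scale)
  have b: "\<forall>k\<in>Zd d. f (\<lambda>i. 0) * g k = f k * g k"
  proof
    fix k assume "k \<in> Zd d"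
    then have "f k = f (\<lambda>i. 0)" by (rule deg0_const[OF 0(1)])
    then show "f (\<lambda>i. 0) * g k = f k * g k" by simp
  qed
  have "deg_le d n (\<lambda>k. f k * g k)" by (rule deg_cong[OF b a])
  then show ?case by simp
next
  case (Suc m)
  note outerIH = Suc.IH
  have main: "deg_le d (Suc m) f \<Longrightarrow> deg_le d n g \<Longrightarrow> deg_le d (Suc m + n) (\<lambda>k. f k * g k)" for n f g
  proof (induction n arbitrary: f g)
    case 0
    have a: "deg_le d (Suc m) (\<lambda>k. g (\<lambda>i. 0) * f k)" using 0(1) by (rule deg_scale)
    have b: "\<forall>k\<in>Zd d. g (\<lambda>i. 0) * f k = f k * g k"
    proof
      fix k assume "k \<in> Zd d"
      then have "g k = g (\<lambda>i. 0)" by (rule deg0_const[OF 0(2)])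
      then show "g (\<lambda>i. 0) * f k = f k * g k" by simp
    qed
    have "deg_le d (Suc m) (\<lambda>k. f k * g k)" by (rule deg_cong[OF b a])
    then show ?case by simp
  next
    case (Suc n)
    have goal: "deg_le d (Suc (m + Suc n)) (\<lambda>k. f k * g k)"
      unfolding deg_le.simps
    proof (intro allI impI)
      fix l assume l: "l < d"
      have e: "dlt l (\<lambda>k. f k * g k) = (\<lambda>k. dlt l f k * g k + f (sh l k) * dlt l g k)"
        unfolding dlt_def by (rule ext) (simp add: algebra_simps)
      have f1: "deg_le d m (dlt l f)" using Suc.prems(1) l by simp
      have A: "deg_le d (m + Suc n) (\<lambda>k. dlt l f k * g k)"
        by (rule outerIH[OF f1 Suc.prems(2)])
      have f2: "deg_le d (Suc m) (\<lambda>k. f (sh l k))" by (rule deg_shift[OF l Suc.prems(1)])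
      have g2: "deg_le d n (dlt l g)" using Suc.prems(2) l by simp
      have B: "deg_le d (Suc m + n) (\<lambda>k. f (sh l k) * dlt l g k)"
        by (rule Suc.IH[OF f2 g2])
      have B': "deg_le d (m + Suc n) (\<lambda>k. f (sh l k) * dlt l g k)"
        using B by simp
      show "deg_le d (m + Suc n) (dlt l (\<lambda>k. f k * g k))"
        unfolding e by (rule deg_add[OF A B'])
    qed
    then show ?case by simp
  qed
  show ?case by (rule main[OF Suc.prems])
qed

lemma deg_var: "deg_le d (Suc 0) (\<lambda>k. of_int (k i))"
  unfolding deg_le.simps(2)
proof (intro allI impI)
  fix l assume "l < d"
  have e: "dlt l (\<lambda>k. of_int (k i)) = (\<lambda>k. if i = l then 1 else 0)"
    unfolding dlt_def sh_def by (rule ext) simp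
  show "deg_le d 0 (dlt l (\<lambda>k. of_int (k i)))" unfolding e by (rule deg_const)
qed

lemma deg_pow: "deg_le d n f \<Longrightarrow> deg_le d (n * e) (\<lambda>k. f k ^ e)"
proof (induction e)
  case 0
  show ?case using deg_const[of d "0" 1] by simp
next
  case (Suc e)
  have "deg_le d (n + n * e) (\<lambda>k. f k * f k ^ e)"
    by (rule deg_mult[OF Suc.prems Suc.IH[OF Suc.prems]])
  then show ?case by (simp add: mult_Suc_right)
qed

lemma deg_prod:
  assumes "finite S" "\<And>i. i \<in> S \<Longrightarrow> deg_le d (N i) (F i)"
  shows "deg_le d (sum N S) (\<lambda>k. \<Prod>i\<in>S. F i k)"
  using assms
proof (induction S rule: finite_induct)
  case empty
  show ?case using deg_const[of d 0 1] by simp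
next
  case (insert x S)
  have a: "deg_le d (N x) (F x)" using insert.prems by simp
  have b: "deg_le d (sum N S) (\<lambda>k. \<Prod>i\<in>S. F i k)" using insert.IH insert.prems by simp
  have "deg_le d (N x + sum N S) (\<lambda>k. F x k * (\<Prod>i\<in>S. F i k))" by (rule deg_mult[OF a b])
  then show ?case using insert.hyps by simp
qed

lemma deg_sum:
  assumes "finite S" "\<And>i. i \<in> S \<Longrightarrow> deg_le d N (F i)"
  shows "deg_le d N (\<lambda>k. \<Sum>i\<in>S. F i k)"
  using assms
proof (induction S rule: finite_induct)
  case empty
  show ?case using deg_const[of d N 0] by simp
next
  case (insert x S)
  have a: "deg_le d N (F x)" using insert.prems by simp
  have b: "deg_le d N (\<lambda>k. \<Sum>i\<in>S. F i k)" using insert.IH insert.prems by simp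
  have "deg_le d N (\<lambda>k. F x k + (\<Sum>i\<in>S. F i k))" by (rule deg_add[OF a b])
  then show ?case using insert.hyps by simp
qed

lemma deg_mnm: "deg_le d (tdeg \<alpha>) (mnm \<alpha>)"
proof -
  have e: "mnm \<alpha> = (\<lambda>k. \<Prod>i\<in>Poly_Mapping.keys \<alpha>. of_int (k i) ^ Poly_Mapping.lookup \<alpha> i)"
    unfolding mnm_def by (rule ext) simp
  have p: "deg_le d (Poly_Mapping.lookup \<alpha> i) (\<lambda>k. of_int (k i) ^ Poly_Mapping.lookup \<alpha> i)" for i
  proof -
    have "deg_le d (Suc 0 * Poly_Mapping.lookup \<alpha> i) (\<lambda>k. (of_int (k i) :: complex) ^ Poly_Mapping.lookup \<alpha> i)"
      by (rule deg_pow[OF deg_var])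
    then show ?thesis by simp
  qed
  have "deg_le d (\<Sum>i\<in>Poly_Mapping.keys \<alpha>. Poly_Mapping.lookup \<alpha> i)
          (\<lambda>k. \<Prod>i\<in>Poly_Mapping.keys \<alpha>. of_int (k i) ^ Poly_Mapping.lookup \<alpha> i)"
    by (rule deg_prod) (simp_all add: p)
  then show ?thesis unfolding e tdeg_def by simp
qed

lemma deg_peval: "deg_le d (\<Sum>\<alpha>\<in>Poly_Mapping.keys p. tdeg \<alpha>) (peval p)"
proof -
  have e: "peval p = (\<lambda>k. \<Sum>\<alpha>\<in>Poly_Mapping.keys p. Poly_Mapping.lookup p \<alpha> * mnm \<alpha> k)"
    by (rule ext) (rule peval_mnm)
  show ?thesis unfolding e
  proof (rule deg_sum)
    fix \<alpha> assume a: "\<alpha> \<in> Poly_Mapping.keys p"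
    have "deg_le d (tdeg \<alpha>) (\<lambda>k. Poly_Mapping.lookup p \<alpha> * mnm \<alpha> k)"
      by (rule deg_scale[OF deg_mnm])
    moreover have "tdeg \<alpha> \<le> (\<Sum>\<alpha>\<in>Poly_Mapping.keys p. tdeg \<alpha>)"
      using a by (intro member_le_sum) simp_all
    ultimately show "deg_le d (\<Sum>\<alpha>\<in>Poly_Mapping.keys p. tdeg \<alpha>) (\<lambda>k. Poly_Mapping.lookup p \<alpha> * mnm \<alpha> k)"
      by (rule deg_mono_le[rotated])
  qed simp
qed

definition ev :: "nat \<Rightarrow> nat \<Rightarrow> int" where
  "ev l = (\<lambda>i. if i = l then 1 else 0)"

definition trunc :: "nat \<Rightarrow> (nat \<Rightarrow> int) \<Rightarrow> (nat \<Rightarrow> int)" where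
  "trunc m k = (\<lambda>i. if i < m then k i else 0)"

lemma ev_Zd: "l < d \<Longrightarrow> ev l \<in> Zd d"
  unfolding ev_def Zd_def by auto

lemma upd_Zd: "k \<in> Zd d \<Longrightarrow> l < d \<Longrightarrow> k(l := t) \<in> Zd d"
  unfolding Zd_def by auto

lemma deg1_step:
  assumes f: "deg_le d (Suc 0) f" and l: "l < d" and k: "k \<in> Zd d"
  shows "f k - f (sh l k) = f (ev l) - f (\<lambda>i. 0)"
proof -
  have c: "deg_le d 0 (dlt l f)" using f[unfolded deg_le.simps(2)] l by blast
  have "dlt l f k = dlt l f (ev l)" using c[unfolded deg_le.simps] k ev_Zd[OF l] by blast
  moreover have "sh l (ev l) = (\<lambda>i. 0)" unfolding sh_def ev_def by (rule ext) simp
  ultimately have "dlt l f k = f (ev l) - f (\<lambda>i. 0)" unfolding dlt_def by simp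
  then show ?thesis unfolding dlt_def .
qed

lemma lin_help1: "(a::complex) - b = D \<Longrightarrow> b = c + x * D \<Longrightarrow> a = c + (x + 1) * D"
  by (simp add: algebra_simps)

lemma lin_help2: "(b::complex) - a = D \<Longrightarrow> b = c + x * D \<Longrightarrow> a = c + (x - 1) * D"
  by (simp add: algebra_simps)

lemma deg1_line:
  assumes f: "deg_le d (Suc 0) f" and l: "l < d" and k: "k \<in> Zd d"
  shows "f (k(l := t)) = f (k(l := 0)) + of_int t * (f (ev l) - f (\<lambda>i. 0))"
proof (induction t rule: int_induct[where k = 0])
  case base show ?case by simp
next
  case (step1 i)
  have a: "f (k(l := i + 1)) - f (sh l (k(l := i + 1))) = f (ev l) - f (\<lambda>i. 0)"
    by (rule deg1_step[OF f l upd_Zd[OF k l]])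
  have b: "sh l (k(l := i + 1)) = k(l := i)" unfolding sh_def by (rule ext) simp
  have c: "f (k(l := i + 1)) - f (k(l := i)) = f (ev l) - f (\<lambda>i. 0)" using a unfolding b .
  have "f (k(l := i + 1)) = f (k(l := 0)) + (of_int i + 1) * (f (ev l) - f (\<lambda>i. 0))"
    by (rule lin_help1[OF c step1.IH])
  then show ?case by (simp only: of_int_add of_int_1)
next
  case (step2 i)
  have a: "f (k(l := i)) - f (sh l (k(l := i))) = f (ev l) - f (\<lambda>i. 0)"
    by (rule deg1_step[OF f l upd_Zd[OF k l]])
  have b: "sh l (k(l := i)) = k(l := i - 1)" unfolding sh_def by (rule ext) simp
  have c: "f (k(l := i)) - f (k(l := i - 1)) = f (ev l) - f (\<lambda>i. 0)" using a unfolding b .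
  have "f (k(l := i - 1)) = f (k(l := 0)) + (of_int i - 1) * (f (ev l) - f (\<lambda>i. 0))"
    by (rule lin_help2[OF c step2.IH])
  then show ?case by (simp only: of_int_diff of_int_1)
qed

lemma deg1_affine:
  assumes f: "deg_le d (Suc 0) f" and k: "k \<in> Zd d"
  shows "f k = f (\<lambda>i. 0) + (\<Sum>l<d. of_int (k l) * (f (ev l) - f (\<lambda>i. 0)))"
proof -
  have main: "m \<le> d \<Longrightarrow> f (trunc m k) = f (\<lambda>i. 0) + (\<Sum>l<m. of_int (k l) * (f (ev l) - f (\<lambda>i. 0)))" for m
  proof (induction m)
    case 0
    have "trunc 0 k = (\<lambda>i. 0)" unfolding trunc_def by simp
    then show ?case by simp
  next
    case (Suc m)
    have m: "m < d" using Suc.prems by simp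
    have tZ: "trunc m k \<in> Zd d" using k unfolding trunc_def Zd_def by auto
    have e1: "trunc (Suc m) k = (trunc m k)(m := k m)" unfolding trunc_def by (rule ext) simp
    have e2: "(trunc m k)(m := 0) = trunc m k" unfolding trunc_def by (rule ext) simp
    have "f (trunc (Suc m) k) = f (trunc m k) + of_int (k m) * (f (ev m) - f (\<lambda>i. 0))"
      using deg1_line[OF f m tZ, of "k m"] unfolding e1 e2 by simp
    then show ?case using Suc.IH m by simp
  qed
  have "trunc d k = k" using k unfolding trunc_def Zd_def by (intro ext) auto
  then show ?thesis using main[of d] by simp
qed

lemma sp_cong:
  assumes "w \<in> translate_span d r U" "\<forall>k\<in>Zd d. \<forall>i<r. w' k i = w k i"
  shows "w' \<in> translate_span d r U"
proof -
  obtain J c where Jc: "finite J" "J \<subseteq> Zd d"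
    "\<forall>k\<in>Zd d. \<forall>i<r. w k i = (\<Sum>j\<in>J. c j * U (\<lambda>l. k l - j l) i)"
    using assms(1) unfolding translate_span_def by blast
  have "\<forall>k\<in>Zd d. \<forall>i<r. w' k i = (\<Sum>j\<in>J. c j * U (\<lambda>l. k l - j l) i)"
    using Jc(3) assms(2) by simp
  then show ?thesis unfolding translate_span_def using Jc(1,2) by blast
qed

lemma sp_base: "U \<in> translate_span d r U"
proof -
  have "\<forall>k\<in>Zd d. \<forall>i<r. U k i = (\<Sum>j\<in>{\<lambda>i. 0}. 1 * U (\<lambda>l. k l - j l) i)" by simp
  moreover have "{\<lambda>i. 0} \<subseteq> Zd d" using zero_Zd by simp
  ultimately show ?thesis unfolding translate_span_def
    by (intro CollectI exI[of _ "{\<lambda>i. 0}"] exI[of _ "\<lambda>j. 1"]) simp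
qed

lemma sum_restrict_help:
  fixes c X :: "'a \<Rightarrow> complex"
  assumes "finite A" "B \<subseteq> A"
  shows "(\<Sum>j\<in>A. (if j \<in> B then c j else 0) * X j) = (\<Sum>j\<in>B. c j * X j)"
proof -
  have "(\<Sum>j\<in>A. (if j \<in> B then c j else 0) * X j) = (\<Sum>j\<in>A. if j \<in> B then c j * X j else 0)"
    by (rule sum.cong) auto
  also have "\<dots> = (\<Sum>j\<in>{j\<in>A. j \<in> B}. c j * X j)"
    using assms(1) by (simp add: sum.inter_filter)
  also have "{j\<in>A. j \<in> B} = B" using assms(2) by blast
  finally show ?thesis .
qed

lemma sp_diff:
  assumes "w1 \<in> translate_span d r U" "w2 \<in> translate_span d r U"
  shows "(\<lambda>k i. w1 k i - a * w2 k i) \<in> translate_span d r U"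
proof -
  obtain J1 c1 where J1: "finite J1" "J1 \<subseteq> Zd d"
    "\<forall>k\<in>Zd d. \<forall>i<r. w1 k i = (\<Sum>j\<in>J1. c1 j * U (\<lambda>l. k l - j l) i)"
    using assms(1) unfolding translate_span_def by blast
  obtain J2 c2 where J2: "finite J2" "J2 \<subseteq> Zd d"
    "\<forall>k\<in>Zd d. \<forall>i<r. w2 k i = (\<Sum>j\<in>J2. c2 j * U (\<lambda>l. k l - j l) i)"
    using assms(2) unfolding translate_span_def by blast
  define J where "J = J1 \<union> J2"
  define c where "c j = (if j \<in> J1 then c1 j else 0) - a * (if j \<in> J2 then c2 j else 0)" for j
  have fJ: "finite J" unfolding J_def using J1 J2 by simp
  have JZ: "J \<subseteq> Zd d" unfolding J_def using J1 J2 by simp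
  have "\<forall>k\<in>Zd d. \<forall>i<r. w1 k i - a * w2 k i = (\<Sum>j\<in>J. c j * U (\<lambda>l. k l - j l) i)"
  proof (intro ballI allI impI)
    fix k i assume k: "k \<in> Zd d" and i: "i < r"
    let ?X = "\<lambda>j. U (\<lambda>l. k l - j l) i"
    have "(\<Sum>j\<in>J. c j * ?X j) = (\<Sum>j\<in>J. (if j \<in> J1 then c1 j else 0) * ?X j) - a * (\<Sum>j\<in>J. (if j \<in> J2 then c2 j else 0) * ?X j)"
      unfolding c_def by (simp add: sum_subtractf sum_distrib_left left_diff_distrib mult.assoc)
    also have "\<dots> = (\<Sum>j\<in>J1. c1 j * ?X j) - a * (\<Sum>j\<in>J2. c2 j * ?X j)"
      using sum_restrict_help[OF fJ, of J1 c1 ?X] sum_restrict_help[OF fJ, of J2 c2 ?X]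
      unfolding J_def by simp
    also have "\<dots> = w1 k i - a * w2 k i" using J1(3) J2(3) k i by simp
    finally show "w1 k i - a * w2 k i = (\<Sum>j\<in>J. c j * ?X j)" by simp
  qed
  then show ?thesis unfolding translate_span_def using fJ JZ by blast
qed

lemma sp_shift:
  assumes "w \<in> translate_span d r U" "l < d"
  shows "(\<lambda>k i. w (sh l k) i) \<in> translate_span d r U"
proof -
  obtain J c where Jc: "finite J" "J \<subseteq> Zd d"
    "\<forall>k\<in>Zd d. \<forall>i<r. w k i = (\<Sum>j\<in>J. c j * U (\<lambda>m. k m - j m) i)"
    using assms(1) unfolding translate_span_def by blast
  define tj where "tj j = j(l := j l + 1)" for j :: "nat \<Rightarrow> int"
  define c' where "c' j = c (j(l := j l - 1))" for j
  have inj: "inj tj" unfolding tj_def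
  proof (rule injI)
    fix x y :: "nat \<Rightarrow> int" assume "x(l := x l + 1) = y(l := y l + 1)"
    then have "\<forall>m. (x(l := x l + 1)) m = (y(l := y l + 1)) m" by simp
    then show "x = y" by (intro ext) (metis fun_upd_apply add_right_cancel)
  qed
  have fJ: "finite (tj ` J)" using Jc(1) by simp
  have JZ: "tj ` J \<subseteq> Zd d" using Jc(2) assms(2) unfolding tj_def Zd_def by auto
  have "\<forall>k\<in>Zd d. \<forall>i<r. w (sh l k) i = (\<Sum>j\<in>tj ` J. c' j * U (\<lambda>m. k m - j m) i)"
  proof (intro ballI allI impI)
    fix k i assume k: "k \<in> Zd d" and i: "i < r"
    have "(\<Sum>j\<in>tj ` J. c' j * U (\<lambda>m. k m - j m) i) = (\<Sum>j\<in>J. c' (tj j) * U (\<lambda>m. k m - tj j m) i)"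
      using inj by (simp add: sum.reindex inj_on_def)
    also have "\<dots> = (\<Sum>j\<in>J. c j * U (\<lambda>m. sh l k m - j m) i)"
    proof (rule sum.cong)
      fix j assume "j \<in> J"
      have e1: "c' (tj j) = c j" unfolding c'_def tj_def
      proof -
        have "(j(l := j l + 1))(l := (j(l := j l + 1)) l - 1) = j" by (rule ext) simp
        then show "c ((j(l := j l + 1))(l := (j(l := j l + 1)) l - 1)) = c j" by simp
      qed
      have e2: "(\<lambda>m. k m - tj j m) = (\<lambda>m. sh l k m - j m)" unfolding tj_def sh_def by (rule ext) simp
      show "c' (tj j) * U (\<lambda>m. k m - tj j m) i = c j * U (\<lambda>m. sh l k m - j m) i"
        unfolding e1 e2 ..
    qed simp
    also have "\<dots> = w (sh l k) i" using Jc(3) sh_Zd[OF k assms(2)] i by simp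
    finally show "w (sh l k) i = (\<Sum>j\<in>tj ` J. c' j * U (\<lambda>m. k m - j m) i)" by simp
  qed
  then show ?thesis unfolding translate_span_def using fJ JZ by blast
qed

definition pgT :: "nat \<Rightarrow> nat \<Rightarrow> (nat \<Rightarrow> complex) \<Rightarrow> (nat \<Rightarrow> (nat \<Rightarrow> int) \<Rightarrow> complex)
    \<Rightarrow> (nat \<Rightarrow> int) \<Rightarrow> nat \<Rightarrow> complex" where
  "pgT d r \<omega> F = (\<lambda>k i. if i < r then gpow d \<omega> k * F i k else 0)"

lemma gpow_sh:
  assumes l: "l < d" and w: "\<omega> l \<noteq> 0"
  shows "gpow d \<omega> k = \<omega> l * gpow d \<omega> (sh l k)"
proof -
  have f: "finite {..<d}" by simp
  have lin: "l \<in> {..<d}" using l by simp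
  have "gpow d \<omega> k = \<omega> l powi k l * (\<Prod>i\<in>{..<d} - {l}. \<omega> i powi k i)"
    unfolding gpow_def by (rule prod.remove[OF f lin])
  moreover have "gpow d \<omega> (sh l k) = \<omega> l powi (sh l k l) * (\<Prod>i\<in>{..<d} - {l}. \<omega> i powi (sh l k) i)"
    unfolding gpow_def by (rule prod.remove[OF f lin])
  moreover have "sh l k l = k l - 1" unfolding sh_def by simp
  moreover have "(\<Prod>i\<in>{..<d} - {l}. \<omega> i powi (sh l k) i) = (\<Prod>i\<in>{..<d} - {l}. \<omega> i powi k i)"
    unfolding sh_def by (rule prod.cong) auto
  moreover have "\<omega> l powi k l = \<omega> l * \<omega> l powi (k l - 1)"
    using power_int_add_1'[of "\<omega> l" "k l - 1"] w by simp
  ultimately show ?thesis by (simp add: mult.assoc)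
qed

lemma gpow_nz: "\<forall>i<d. \<omega> i \<noteq> 0 \<Longrightarrow> gpow d \<omega> k \<noteq> 0"
  unfolding gpow_def by (simp add: prod_zero_iff)

lemma T_dlt:
  assumes F: "pgT d r \<omega> F \<in> translate_span d r U" and l: "l < d" and w: "\<omega> l \<noteq> 0"
  shows "pgT d r \<omega> (\<lambda>i. dlt l (F i)) \<in> translate_span d r U"
proof -
  have s: "(\<lambda>k i. pgT d r \<omega> F (sh l k) i) \<in> translate_span d r U" by (rule sp_shift[OF F l])
  have t: "(\<lambda>k i. pgT d r \<omega> F k i - \<omega> l * pgT d r \<omega> F (sh l k) i) \<in> translate_span d r U"
    by (rule sp_diff[OF F s])
  show ?thesis
  proof (rule sp_cong[OF t], intro ballI allI impI)
    fix k i assume "k \<in> Zd d" "i < r"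
    then show "pgT d r \<omega> (\<lambda>i. dlt l (F i)) k i = pgT d r \<omega> F k i - \<omega> l * pgT d r \<omega> F (sh l k) i"
      unfolding pgT_def dlt_def using gpow_sh[of l d \<omega> k, OF l w] by (simp add: algebra_simps)
  qed
qed

definition vdeg :: "nat \<Rightarrow> nat \<Rightarrow> nat \<Rightarrow> (nat \<Rightarrow> (nat \<Rightarrow> int) \<Rightarrow> complex) \<Rightarrow> bool" where
  "vdeg d r n F = (\<forall>i<r. deg_le d n (F i))"

lemma descent:
  assumes "\<forall>i<d. \<omega> i \<noteq> 0"
  shows "pgT d r \<omega> F \<in> translate_span d r U \<Longrightarrow> vdeg d r (Suc n) F \<Longrightarrow> \<not> vdeg d r n F \<Longrightarrow>
    \<exists>G. pgT d r \<omega> G \<in> translate_span d r U \<and> vdeg d r (Suc 0) G \<and> \<not> vdeg d r 0 G"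
proof (induction n arbitrary: F)
  case 0 thus ?case by blast
next
  case (Suc n)
  obtain i where i: "i < r" "\<not> deg_le d (Suc n) (F i)" using Suc.prems(3) unfolding vdeg_def by blast
  obtain l where l: "l < d" "\<not> deg_le d n (dlt l (F i))" using i(2) by auto
  let ?G = "\<lambda>i. dlt l (F i)"
  have a: "pgT d r \<omega> ?G \<in> translate_span d r U" using T_dlt[OF Suc.prems(1) l(1)] assms l(1) by blast
  have b: "vdeg d r (Suc n) ?G" using Suc.prems(2) l(1) unfolding vdeg_def by simp
  have c: "\<not> vdeg d r n ?G" using i l unfolding vdeg_def by blast
  show ?case by (rule Suc.IH[OF a b c])
qed

definition lin :: "nat \<Rightarrow> complex \<Rightarrow> (nat \<Rightarrow> complex) \<Rightarrow> mpoly" where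
  "lin d c a = Poly_Mapping.single 0 c + (\<Sum>l<d. Poly_Mapping.single (Poly_Mapping.single l 1) (a l))"

lemma keys_lin: "Poly_Mapping.keys (lin d c a) \<subseteq> insert 0 ((\<lambda>l. Poly_Mapping.single l 1) ` {..<d})"
proof -
  have "Poly_Mapping.keys (lin d c a) \<subseteq> Poly_Mapping.keys (Poly_Mapping.single 0 c) \<union>
      Poly_Mapping.keys (\<Sum>l<d. Poly_Mapping.single (Poly_Mapping.single l (1::nat)) (a l))"
    unfolding lin_def by (rule keys_add)
  also have "\<dots> \<subseteq> {0} \<union> (\<Union>l\<in>{..<d}. Poly_Mapping.keys (Poly_Mapping.single (Poly_Mapping.single l (1::nat)) (a l)))"
    using keys_sum[of "\<lambda>l. Poly_Mapping.single (Poly_Mapping.single l (1::nat)) (a l)" "{..<d}"] by auto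
  also have "\<dots> \<subseteq> insert 0 ((\<lambda>l. Poly_Mapping.single l 1) ` {..<d})" by auto
  finally show ?thesis .
qed

lemma peval_lin: "peval (lin d c a) k = c + (\<Sum>l<d. a l * of_int (k l))"
proof -
  have "peval (lin d c a) k = c * mnm 0 k + (\<Sum>l<d. a l * mnm (Poly_Mapping.single l 1) k)"
    unfolding lin_def peval_add peval_sum peval_single ..
  also have "\<dots> = c + (\<Sum>l<d. a l * of_int (k l))" unfolding mnm_single1 mnm_zero by simp
  finally show ?thesis .
qed

lemma single1_eq: "Poly_Mapping.single l' (1::nat) = Poly_Mapping.single l 1 \<longleftrightarrow> l' = l"
proof
  assume "Poly_Mapping.single l' (1::nat) = Poly_Mapping.single l 1"
  then have "Poly_Mapping.lookup (Poly_Mapping.single l' (1::nat)) l = Poly_Mapping.lookup (Poly_Mapping.single l 1) l" by simp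
  then show "l' = l" by (simp add: lookup_single when_def split: if_splits)
qed simp

lemma single1_nz: "Poly_Mapping.single l (1::nat) \<noteq> 0"
proof
  assume "Poly_Mapping.single l (1::nat) = 0"
  then have "Poly_Mapping.lookup (Poly_Mapping.single l (1::nat)) l = Poly_Mapping.lookup 0 l" by simp
  then show False by simp
qed

lemma lookup_lin:
  assumes "l < d"
  shows "Poly_Mapping.lookup (lin d c a) (Poly_Mapping.single l 1) = a l"
proof -
  define e :: "nat \<Rightarrow>\<^sub>0 nat" where "e = Poly_Mapping.single l 1"
  have "Poly_Mapping.lookup (lin d c a) e =
      Poly_Mapping.lookup (Poly_Mapping.single 0 c) e +
      (\<Sum>l'<d. Poly_Mapping.lookup (Poly_Mapping.single (Poly_Mapping.single l' 1) (a l')) e)"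
    by (simp only: lin_def lookup_add lookup_sum)
  also have "Poly_Mapping.lookup (Poly_Mapping.single 0 c) e = 0"
    using single1_nz[of l] unfolding e_def by (simp add: lookup_single when_def)
  also have "(\<Sum>l'<d. Poly_Mapping.lookup (Poly_Mapping.single (Poly_Mapping.single l' 1) (a l')) e)
      = (\<Sum>l'<d. if l' = l then a l' else 0)"
    unfolding e_def by (rule sum.cong) (simp_all add: lookup_single when_def single1_eq[simplified])
  also have "\<dots> = a l" using assms by simp
  finally show ?thesis unfolding e_def by simp
qed

lemma tdeg_zero: "tdeg 0 = 0" unfolding tdeg_def by simp

lemma tdeg_single1: "tdeg (Poly_Mapping.single l 1) = 1" unfolding tdeg_def by simp

lemma lin_props:
  shows "mpoly_vars_in d (lin d c a)" and "\<forall>\<alpha>\<in>Poly_Mapping.keys (lin d c a). tdeg \<alpha> \<le> 1"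
proof -
  have K: "\<alpha> = 0 \<or> (\<exists>l<d. \<alpha> = Poly_Mapping.single l 1)" if "\<alpha> \<in> Poly_Mapping.keys (lin d c a)" for \<alpha>
    using keys_lin[of d c a] that by blast
  show "mpoly_vars_in d (lin d c a)" unfolding mpoly_vars_in_def
  proof (intro allI impI)
    fix \<alpha> assume "\<alpha> \<in> Poly_Mapping.keys (lin d c a)"
    then have "\<alpha> = 0 \<or> (\<exists>l<d. \<alpha> = Poly_Mapping.single l 1)" by (rule K)
    then show "Poly_Mapping.keys \<alpha> \<subseteq> {..<d}"
    proof
      assume "\<alpha> = 0" then show ?thesis by simp
    next
      assume "\<exists>l<d. \<alpha> = Poly_Mapping.single l 1"
      then obtain l where "l < d" "\<alpha> = Poly_Mapping.single l 1" by blast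
      then show ?thesis by simp
    qed
  qed
  show "\<forall>\<alpha>\<in>Poly_Mapping.keys (lin d c a). tdeg \<alpha> \<le> 1"
  proof
    fix \<alpha> assume "\<alpha> \<in> Poly_Mapping.keys (lin d c a)"
    then have "\<alpha> = 0 \<or> (\<exists>l<d. \<alpha> = Poly_Mapping.single l 1)" by (rule K)
    then show "tdeg \<alpha> \<le> 1"
    proof
      assume "\<alpha> = 0" then show ?thesis by (simp add: tdeg_zero)
    next
      assume "\<exists>l<d. \<alpha> = Poly_Mapping.single l 1"
      then obtain l where "\<alpha> = Poly_Mapping.single l 1" by blast
      then show ?thesis using tdeg_single1[of l] by simp
    qed
  qed
qed

lemma affine_lin:
  assumes f: "deg_le d (Suc 0) f" and k: "k \<in> Zd d"
  shows "peval (lin d (f (\<lambda>j. 0)) (\<lambda>l. f (ev l) - f (\<lambda>j. 0))) k = f k"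
  unfolding peval_lin deg1_affine[OF f k] by (simp add: mult.commute)

lemma vdeg_mono_le: "n \<le> m \<Longrightarrow> vdeg d r n F \<Longrightarrow> vdeg d r m F"
  unfolding vdeg_def using deg_mono_le by blast

theorem lemma5p1:
  fixes d r :: nat and \<omega> :: "nat \<Rightarrow> complex" and h :: "nat \<Rightarrow> mpoly"
  assumes "\<forall>i<d. \<omega> i \<noteq> 0"
    and "\<forall>i<r. mpoly_vars_in d (h i)"
    and "\<exists>k\<in>Zd d. \<exists>i<r. pg_seq d r \<omega> h k i \<noteq> 0"
    and "\<exists>i<r. h i \<noteq> 0 \<and> tdeg (multideg (h i)) \<ge> 2"
  shows "\<exists>g :: nat \<Rightarrow> mpoly.
           (\<forall>i<r. mpoly_vars_in d (g i) \<and> (\<forall>\<alpha>\<in>Poly_Mapping.keys (g i). tdeg \<alpha> \<le> 1))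
         \<and> (\<exists>i<r. \<exists>\<alpha>\<in>Poly_Mapping.keys (g i). \<alpha> \<noteq> 0)
         \<and> (\<exists>k\<in>Zd d. \<exists>i<r. pg_seq d r \<omega> g k i \<noteq> 0)
         \<and> pg_seq d r \<omega> g \<in> translate_span d r (pg_seq d r \<omega> h)"
proof -
  let ?U = "pg_seq d r \<omega> h"
  define F0 where "F0 = (\<lambda>i. peval (h i))"
  have sp0: "pgT d r \<omega> F0 \<in> translate_span d r ?U"
    by (rule sp_cong[OF sp_base]) (simp add: pgT_def pg_seq_def F0_def)
  have nv1: "\<not> vdeg d r (Suc 0) F0"
  proof
    assume v: "vdeg d r (Suc 0) F0"
    obtain i0 where i0: "i0 < r" "h i0 \<noteq> 0" "tdeg (multideg (h i0)) \<ge> 2" using assms(4) by blast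
    define f where "f = peval (h i0)"
    have f1: "deg_le d (Suc 0) f" using v i0(1) unfolding vdeg_def F0_def f_def by blast
    define q where "q = lin d (f (\<lambda>j. 0)) (\<lambda>l. f (ev l) - f (\<lambda>j. 0))"
    have qf: "\<forall>k\<in>Zd d. peval q k = f k" unfolding q_def using affine_lin[OF f1] by blast
    have vh: "mpoly_vars_in d (h i0)" using assms(2) i0(1) by blast
    have vq: "mpoly_vars_in d q" unfolding q_def by (rule lin_props(1))
    have vars: "mpoly_vars_in d (h i0 - q)" unfolding mpoly_vars_in_def
    proof (intro allI impI)
      fix \<alpha> assume "\<alpha> \<in> Poly_Mapping.keys (h i0 - q)"
      then have "\<alpha> \<in> Poly_Mapping.keys (h i0) \<or> \<alpha> \<in> Poly_Mapping.keys q" using keys_diff[of "h i0" q] by blast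
      then show "Poly_Mapping.keys \<alpha> \<subseteq> {..<d}" using vh vq unfolding mpoly_vars_in_def by blast
    qed
    have z: "\<forall>k\<in>Zd d. peval (h i0 - q) k = 0"
      using qf unfolding peval_diff f_def by simp
    have "h i0 - q = 0" by (rule peval_identity[OF vars z])
    then have hq: "h i0 = q" by simp
    have "multideg (h i0) \<in> Poly_Mapping.keys q" using multideg_in_keys[OF i0(2)] hq by simp
    then have "tdeg (multideg (h i0)) \<le> 1" using lin_props(2) unfolding q_def by blast
    then show False using i0(3) by simp
  qed
  define N where "N = (\<Sum>i<r. \<Sum>\<alpha>\<in>Poly_Mapping.keys (h i). tdeg \<alpha>)"
  have vN: "vdeg d r N F0" unfolding vdeg_def
  proof (intro allI impI)
    fix i assume i: "i < r"
    have "(\<Sum>\<alpha>\<in>Poly_Mapping.keys (h i). tdeg \<alpha>) \<le> N" unfolding N_def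
      using i by (intro member_le_sum) simp_all
    then show "deg_le d N (F0 i)" unfolding F0_def by (rule deg_mono_le[OF _ deg_peval])
  qed
  define n0 where "n0 = (LEAST n. vdeg d r n F0)"
  have vn0: "vdeg d r n0 F0" unfolding n0_def using vN by (rule LeastI)
  have "\<not> n0 \<le> Suc 0" using vdeg_mono_le[OF _ vn0] nv1 by blast
  then obtain m where m: "n0 = Suc m" by (cases n0) auto
  have "m < n0" using m by simp
  then have nvm: "\<not> vdeg d r m F0" unfolding n0_def by (rule not_less_Least)
  obtain G where G: "pgT d r \<omega> G \<in> translate_span d r ?U" "vdeg d r (Suc 0) G" "\<not> vdeg d r 0 G"
  proof -
    have "vdeg d r (Suc m) F0" using vn0 m by simp
    then show ?thesis using descent[OF assms(1) sp0 _ nvm] that by blast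
  qed
  define g where "g i = lin d (G i (\<lambda>j. 0)) (\<lambda>l. G i (ev l) - G i (\<lambda>j. 0))" for i
  have hG: "peval (g i) k = G i k" if "i < r" "k \<in> Zd d" for i k
  proof -
    have "deg_le d (Suc 0) (G i)" using G(2) that(1) unfolding vdeg_def by blast
    then show ?thesis unfolding g_def by (rule affine_lin[OF _ that(2)])
  qed
  have c1: "\<forall>i<r. mpoly_vars_in d (g i) \<and> (\<forall>\<alpha>\<in>Poly_Mapping.keys (g i). tdeg \<alpha> \<le> 1)"
  proof (intro allI impI conjI)
    fix i assume "i < r"
    show "mpoly_vars_in d (g i)" unfolding g_def by (rule lin_props(1))
    show "\<forall>\<alpha>\<in>Poly_Mapping.keys (g i). tdeg \<alpha> \<le> 1" unfolding g_def by (rule lin_props(2))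
  qed
  obtain i k k' where ikk: "i < r" "k \<in> Zd d" "k' \<in> Zd d" "G i k \<noteq> G i k'"
    using G(3) unfolding vdeg_def deg_le.simps by blast
  have c2: "\<exists>i<r. \<exists>\<alpha>\<in>Poly_Mapping.keys (g i). \<alpha> \<noteq> 0"
  proof (rule ccontr)
    assume nc: "\<not> (\<exists>i<r. \<exists>\<alpha>\<in>Poly_Mapping.keys (g i). \<alpha> \<noteq> 0)"
    have nk: "\<forall>l<d. Poly_Mapping.single l (1::nat) \<notin> Poly_Mapping.keys (g i)"
    proof (intro allI impI notI)
      fix l assume "l < d" and kin: "Poly_Mapping.single l (1::nat) \<in> Poly_Mapping.keys (g i)"
      have "\<exists>\<alpha>\<in>Poly_Mapping.keys (g i). \<alpha> \<noteq> 0" using kin single1_nz[of l] by (rule bexI[rotated])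
      then show False using nc ikk(1) by blast
    qed
    have a0: "\<forall>l<d. G i (ev l) - G i (\<lambda>j. 0) = 0"
    proof (intro allI impI)
      fix l assume l: "l < d"
      have "Poly_Mapping.single l (1::nat) \<notin> Poly_Mapping.keys (g i)" using l nk by blast
      then have "Poly_Mapping.lookup (g i) (Poly_Mapping.single l 1) = 0" by (simp only: in_keys_iff not_not)
      then show "G i (ev l) - G i (\<lambda>j. 0) = 0" unfolding g_def lookup_lin[OF l] .
    qed
    have sz: "(\<Sum>l<d. (G i (ev l) - G i (\<lambda>j. 0)) * of_int (x l)) = 0" for x :: "nat \<Rightarrow> int"
    proof (rule sum.neutral, rule ballI)
      fix l assume "l \<in> {..<d}"
      then have "G i (ev l) - G i (\<lambda>j. 0) = 0" using a0 by blast
      then show "(G i (ev l) - G i (\<lambda>j. 0)) * of_int (x l) = 0" by simp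
    qed
    have "peval (g i) k = G i (\<lambda>j. 0)" unfolding g_def peval_lin sz by simp
    moreover have "peval (g i) k' = G i (\<lambda>j. 0)" unfolding g_def peval_lin sz by simp
    ultimately have "G i k = G i k'" using hG[OF ikk(1,2)] hG[OF ikk(1,3)] by simp
    then show False using ikk(4) by blast
  qed
  have c3: "\<exists>k\<in>Zd d. \<exists>i<r. pg_seq d r \<omega> g k i \<noteq> 0"
  proof -
    have "G i k \<noteq> 0 \<or> G i k' \<noteq> 0" using ikk(4) by auto
    moreover have "pg_seq d r \<omega> g k i = gpow d \<omega> k * G i k" "pg_seq d r \<omega> g k' i = gpow d \<omega> k' * G i k'"
      unfolding pg_seq_def using hG[OF ikk(1,2)] hG[OF ikk(1,3)] ikk(1) by simp_all
    moreover have "gpow d \<omega> k \<noteq> 0" "gpow d \<omega> k' \<noteq> 0" using gpow_nz[OF assms(1)] by blast+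
    ultimately have "pg_seq d r \<omega> g k i \<noteq> 0 \<or> pg_seq d r \<omega> g k' i \<noteq> 0" by simp
    then show ?thesis using ikk(1,2,3) by blast
  qed
  have c4: "pg_seq d r \<omega> g \<in> translate_span d r ?U"
  proof (rule sp_cong[OF G(1)], intro ballI allI impI)
    fix k i assume k: "k \<in> Zd d" and i: "i < r"
    show "pg_seq d r \<omega> g k i = pgT d r \<omega> G k i" unfolding pg_seq_def pgT_def using hG[OF i k] i by simp
  qed
  show ?thesis by (rule exI[of _ g]) (intro conjI c1 c2 c3 c4)
qed

end
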